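(* Let $A\in\mathbb{C}^{m\times n}$ have rank $r$ and $B\in\mathbb{C}^{m\times n}$ have rank $s$, with singular value decompositions $$A=U\begin{pmatrix}\Sigma_{1}&0\\0&0\end{pmatrix}V^{\ast}=U_{1}\Sigma_{1}V_{1}^{\ast},\qquad B=\widetilde{U}\begin{pmatrix}\widetilde{\Sigma}_{1}&0\\0&0\end{pmatrix}\widetilde{V}^{\ast}=\widetilde{U}_{1}\widetilde{\Sigma}_{1}\widetilde{V}_{1}^{\ast},$$ where $U=(U_{1},U_{2})$ and $\widetilde{U}=(\widetilde{U}_{1},\widetilde{U}_{2})$ are $m\times m$ unitary, $V=(V_{1},V_{2})$ and $\widetilde{V}=(\widetilde{V}_{1},\widetilde{V}_{2})$ are $n\times n$ unitary, $U_{1}\in\mathbb{C}^{m\times r}$, $V_{1}\in\mathbb{C}^{n\times r}$, $\widetilde{U}_{1}\in\mathbb{C}^{m\times s}$, $\widetilde{V}_{1}\in\mathbb{C}^{n\times s}$, $\Sigma_{1}=\operatorname{diag}(\sigma_{1},\ldots,\sigma_{r})$ with $\sigma_{1}\geq\cdots\geq\sigma_{r}>0$, and $\widetilde{\Sigma}_{1}=\operatorname{diag}(\widetilde{\sigma}_{1},\ldots,\widetilde{\sigma}_{s})$ with $\widetilde{\sigma}_{1}\geq\cdots\geq\widetilde{\sigma}_{s}>0$. Let $E=B-A$. Then $$\|B^{\dagger}-A^{\dagger}\|_{F}^{2}\leq\|B^{\dagger}\|_{2}^{2}\|\widetilde{U}_{1}^{\ast}U_{2}\|_{F}^{2}+\|A^{\dagger}\|_{2}^{2}\|\widetilde{V}_{2}^{\ast}V_{1}\|_{F}^{2}+\|B^{\dagger}EA^{\dagger}\|_{F}^{2},$$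 $$\|B^{\dagger}-A^{\dagger}\|_{F}^{2}\leq\|A^{\dagger}\|_{2}^{2}\|\widetilde{U}_{2}^{\ast}U_{1}\|_{F}^{2}+\|B^{\dagger}\|_{2}^{2}\|\widetilde{V}_{1}^{\ast}V_{2}\|_{F}^{2}+\|A^{\dagger}EB^{\dagger}\|_{F}^{2},$$ and $$\|B^{\dagger}-A^{\dagger}\|_{F}^{2}\geq\frac{\|\widetilde{U}_{1}^{\ast}U_{2}\|_{F}^{2}}{\|B\|_{2}^{2}}+\frac{\|\widetilde{V}_{2}^{\ast}V_{1}\|_{F}^{2}}{\|A\|_{2}^{2}}+\|B^{\dagger}EA^{\dagger}\|_{F}^{2},$$ $$\|B^{\dagger}-A^{\dagger}\|_{F}^{2}\geq\frac{\|\widetilde{U}_{2}^{\ast}U_{1}\|_{F}^{2}}{\|A\|_{2}^{2}}+\frac{\|\widetilde{V}_{1}^{\ast}V_{2}\|_{F}^{2}}{\|B\|_{2}^{2}}+\|A^{\dagger}EB^{\dagger}\|_{F}^{2}.$$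
   Context: $M^{\dagger}$ denotes the Moore–Penrose inverse of $M$, $M^{\ast}$ the conjugate transpose, $\|\cdot\|_{2}$ the spectral norm and $\|\cdot\|_{F}$ the Frobenius norm. *)

theory Defs
  imports Complex_Main "Jordan_Normal_Form.Schur_Decomposition" "Jordan_Normal_Form.DL_Rank"
begin

definition unitary_mat :: "nat \<Rightarrow> complex mat \<Rightarrow> bool" where
  "unitary_mat n U \<longleftrightarrow> U \<in> carrier_mat n n \<and>
     U * mat_adjoint U = 1\<^sub>m n \<and> mat_adjoint U * U = 1\<^sub>m n"

definition col_block :: "complex mat \<Rightarrow> nat \<Rightarrow> nat \<Rightarrow> complex mat" where
  "col_block M a b = mat (dim_row M) (b - a) (\<lambda>(i,j). M $$ (i, a + j))"

definition vnorm :: "complex vec \<Rightarrow> real" where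
  "vnorm x = sqrt (\<Sum>i<dim_vec x. (cmod (x $ i))\<^sup>2)"

definition frob_norm :: "complex mat \<Rightarrow> real" where
  "frob_norm M = sqrt (\<Sum>i<dim_row M. \<Sum>j<dim_col M. (cmod (M $$ (i,j)))\<^sup>2)"

definition spec_norm :: "complex mat \<Rightarrow> real" where
  "spec_norm M = Sup {vnorm (M *\<^sub>v x) | x. x \<in> carrier_vec (dim_col M) \<and> vnorm x \<le> 1}"

definition is_mp_inverse :: "complex mat \<Rightarrow> complex mat \<Rightarrow> bool" where
  "is_mp_inverse A X \<longleftrightarrow> X \<in> carrier_mat (dim_col A) (dim_row A) \<and>
     A * X * A = A \<and> X * A * X = X \<and>
     mat_adjoint (A * X) = A * X \<and> mat_adjoint (X * A) = X * A"

definition mp_inverse :: "complex mat \<Rightarrow> complex mat" where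
  "mp_inverse A = (THE X. is_mp_inverse A X)"

definition sv_block :: "nat \<Rightarrow> nat \<Rightarrow> nat \<Rightarrow> (nat \<Rightarrow> real) \<Rightarrow> complex mat" where
  "sv_block m n r \<sigma> = four_block_mat (mat_diag r (\<lambda>i. complex_of_real (\<sigma> i)))
      (0\<^sub>m r (n - r)) (0\<^sub>m (m - r) r) (0\<^sub>m (m - r) (n - r))"

end

theory Submission
  imports Defs "HOL-Analysis.L2_Norm"
begin


declare assoc_mult_mat[simp del]

lemma adj_eq: "mat_adjoint A = mat (dim_col A) (dim_row A) (\<lambda>(i,j). cnj (A $$ (j,i)))"
  unfolding mat_adjoint_def
  by (intro eq_matI, auto simp: mat_of_rows_index)

lemma adj_carrier[simp]: "mat_adjoint (A::complex mat) \<in> carrier_mat (dim_col A) (dim_row A)"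
  unfolding adj_eq by simp

lemma adj_dims[simp]: "dim_row (mat_adjoint (A::complex mat)) = dim_col A" "dim_col (mat_adjoint A) = dim_row A"
  unfolding adj_eq by auto

lemma adj_index[simp]: "i < dim_col (A::complex mat) \<Longrightarrow> j < dim_row A \<Longrightarrow> mat_adjoint A $$ (i,j) = cnj (A $$ (j,i))"
  unfolding adj_eq by auto

lemma adj_adj[simp]: "mat_adjoint (mat_adjoint A) = (A::complex mat)"
  by (intro eq_matI, auto)

lemma adj_mult: assumes "(A::complex mat) \<in> carrier_mat n k" "B \<in> carrier_mat k l"
  shows "mat_adjoint (A * B) = mat_adjoint B * mat_adjoint A"
  using assms
  by (intro eq_matI, auto simp: scalar_prod_def intro!: sum.cong)

lemma adj_minus: assumes "(A::complex mat) \<in> carrier_mat n k" "B \<in> carrier_mat n k"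
  shows "mat_adjoint (A - B) = mat_adjoint A - mat_adjoint B"
  using assms by (intro eq_matI, auto)

lemma carr3: "X \<in> carrier_mat a b \<Longrightarrow> Y \<in> carrier_mat b c \<Longrightarrow> Z \<in> carrier_mat c d \<Longrightarrow> X * Y * Z \<in> carrier_mat a d"
  by (metis mult_carrier_mat)

definition gd :: "nat \<Rightarrow> nat \<Rightarrow> nat \<Rightarrow> (nat \<Rightarrow> complex) \<Rightarrow> complex mat" where
  "gd m n r d = mat m n (\<lambda>(i,j). if i = j \<and> i < r then d i else 0)"

lemma gd_carrier[simp]: "gd m n r d \<in> carrier_mat m n" unfolding gd_def by simp
lemma gd_dims[simp]: "dim_row (gd m n r d) = m" "dim_col (gd m n r d) = n" unfolding gd_def by auto

lemma sv_block_gd: "r \<le> m \<Longrightarrow> r \<le> n \<Longrightarrow> sv_block m n r \<sigma> = gd m n r (\<lambda>i. complex_of_real (\<sigma> i))"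
  unfolding sv_block_def gd_def
  by (intro eq_matI, auto simp: mat_diag_def)

lemma gd_mult_left: assumes Q: "Q \<in> carrier_mat n l" and "r \<le> m" "r \<le> n"
  shows "gd m n r d * Q = mat m l (\<lambda>(i,j). if i < r then d i * Q $$ (i,j) else 0)"
proof (intro eq_matI)
  fix i j assume i: "i < dim_row (mat m l (\<lambda>(i,j). if i < r then d i * Q $$ (i,j) else 0))"
    and j: "j < dim_col (mat m l (\<lambda>(i,j). if i < r then d i * Q $$ (i,j) else 0))"
  have "(gd m n r d * Q) $$ (i,j) = (\<Sum>k<n. (if i = k \<and> i < r then d i else 0) * Q $$ (k,j))"
    using i j Q unfolding gd_def by (auto simp: scalar_prod_def lessThan_atLeast0 intro!: sum.cong)
  also have "\<dots> = (if i < r then d i * Q $$ (i,j) else 0)"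
    using assms by (auto simp: if_distrib[of "\<lambda>x. x * _"] sum.delta cong: if_cong)
  finally show "(gd m n r d * Q) $$ (i,j) = mat m l (\<lambda>(i,j). if i < r then d i * Q $$ (i,j) else 0) $$ (i,j)"
    using i j by simp
qed (insert assms, auto)

lemma gd_mult_right: assumes Q: "Q \<in> carrier_mat l m" and "r \<le> m" "r \<le> n"
  shows "Q * gd m n r d = mat l n (\<lambda>(i,j). if j < r then Q $$ (i,j) * d j else 0)"
proof (intro eq_matI)
  fix i j assume i: "i < dim_row (mat l n (\<lambda>(i,j). if j < r then Q $$ (i,j) * d j else 0))"
    and j: "j < dim_col (mat l n (\<lambda>(i,j). if j < r then Q $$ (i,j) * d j else 0))"
  have "(Q * gd m n r d) $$ (i,j) = (\<Sum>k<m. Q $$ (i,k) * (if k = j \<and> k < r then d k else 0))"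
    using i j Q unfolding gd_def by (auto simp: scalar_prod_def lessThan_atLeast0 intro!: sum.cong)
  also have "\<dots> = (\<Sum>k<m. if k = j then (if j < r then Q $$ (i,j) * d j else 0) else 0)"
    by (intro sum.cong, auto)
  also have "\<dots> = (if j < r then Q $$ (i,j) * d j else 0)"
    using assms j by (auto simp: sum.delta)
  finally show "(Q * gd m n r d) $$ (i,j) = mat l n (\<lambda>(i,j). if j < r then Q $$ (i,j) * d j else 0) $$ (i,j)"
    using i j by simp
qed (insert assms, auto)

lemma gd_mult_gd: assumes "r \<le> m" "r \<le> n" "r \<le> l"
  shows "gd m n r d * gd n l r e = gd m l r (\<lambda>i. d i * e i)"
  using assms by (subst gd_mult_left[of _ n l], auto simp: gd_def)

lemma gd_adj: "mat_adjoint (gd m n r d) = gd n m r (\<lambda>i. cnj (d i))"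
  by (intro eq_matI, auto simp: gd_def)



definition fro2 :: "complex mat \<Rightarrow> real" where
  "fro2 M = (\<Sum>i<dim_row M. \<Sum>j<dim_col M. (cmod (M $$ (i,j)))\<^sup>2)"

lemma fro2_nonneg: "0 \<le> fro2 M" unfolding fro2_def by (intro sum_nonneg, auto)

lemma frob_sq: "(frob_norm M)\<^sup>2 = fro2 M"
  unfolding frob_norm_def fro2_def[symmetric] using fro2_nonneg by simp

lemma cnorm_sq: "(complex_of_real (cmod z))\<^sup>2 = z * cnj z"
  by (metis complex_norm_square of_real_power)

lemma fro2_c1: "complex_of_real (fro2 M) = (\<Sum>i<dim_row M. (M * mat_adjoint M) $$ (i,i))"
  unfolding fro2_def of_real_sum
  by (intro sum.cong refl, auto simp: scalar_prod_def cnorm_sq lessThan_atLeast0 intro!: sum.cong)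

lemma fro2_c2: "complex_of_real (fro2 M) = (\<Sum>j<dim_col M. (mat_adjoint M * M) $$ (j,j))"
  unfolding fro2_def of_real_sum
  apply (subst sum.swap)
  by (intro sum.cong refl, auto simp: scalar_prod_def cnorm_sq mult.commute lessThan_atLeast0 intro!: sum.cong)

lemma fro2_adj: "fro2 (mat_adjoint M) = fro2 M"
  unfolding fro2_def
  by (subst sum.swap, intro sum.cong refl, auto)

lemma unitaryD: assumes "unitary_mat n U"
  shows "U \<in> carrier_mat n n" "mat_adjoint U \<in> carrier_mat n n" "U * mat_adjoint U = 1\<^sub>m n" "mat_adjoint U * U = 1\<^sub>m n"
  using assms unfolding unitary_mat_def by auto

lemma unitary_adj: "unitary_mat n U \<Longrightarrow> unitary_mat n (mat_adjoint U)"
  unfolding unitary_mat_def by auto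

lemma fro2_left: assumes M: "M \<in> carrier_mat k l" and X: "X \<in> carrier_mat k' k"
  and XX: "mat_adjoint X * X = 1\<^sub>m k"
  shows "fro2 (X * M) = fro2 M"
proof -
  have "mat_adjoint (X * M) * (X * M) = mat_adjoint M * mat_adjoint X * (X * M)"
    by (subst adj_mult[OF X M], rule refl)
  also have "\<dots> = mat_adjoint M * ((mat_adjoint X * X) * M)"
  proof -
    have aM: "mat_adjoint M \<in> carrier_mat l k" and aX: "mat_adjoint X \<in> carrier_mat k k'"
      using M X by (auto intro!: carrier_matI)
    show ?thesis
      by (subst assoc_mult_mat[OF aM aX mult_carrier_mat[OF X M]],
          subst assoc_mult_mat[OF aX X M], rule refl)
  qed
  also have "\<dots> = mat_adjoint M * M" using XX M by simp
  finally have e: "mat_adjoint (X * M) * (X * M) = mat_adjoint M * M" .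
  have "complex_of_real (fro2 (X * M)) = complex_of_real (fro2 M)"
    unfolding fro2_c2 e using M X by simp
  thus ?thesis by simp
qed

lemma fro2_right: assumes M: "M \<in> carrier_mat k l" and Y: "Y \<in> carrier_mat l l'"
  and YY: "Y * mat_adjoint Y = 1\<^sub>m l"
  shows "fro2 (M * Y) = fro2 M"
proof -
  have "fro2 (M * Y) = fro2 (mat_adjoint (M * Y))" by (simp add: fro2_adj)
  also have "\<dots> = fro2 (mat_adjoint Y * mat_adjoint M)" using adj_mult[OF M Y] by simp
  also have "\<dots> = fro2 (mat_adjoint M)"
    by (rule fro2_left[of _ l k], insert M Y YY, auto intro!: carrier_matI)
  finally show ?thesis by (simp add: fro2_adj)
qed


lemma assoc2: "dim_col A = dim_row B \<Longrightarrow> dim_col B = dim_row C \<Longrightarrow> (A * B) * C = A * (B * (C:: 'a::comm_ring_1 mat))"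
  by (rule assoc_mult_mat[of A "dim_row A" "dim_col A" B "dim_col B" C "dim_col C"], auto intro!: carrier_matI)

lemma adj_mult2: "dim_col A = dim_row B \<Longrightarrow> mat_adjoint (A * B) = mat_adjoint B * mat_adjoint (A::complex mat)"
  by (rule adj_mult, auto intro!: carrier_matI)

lemma mp_unique: assumes A: "A \<in> carrier_mat m n" and X: "is_mp_inverse A X" and Y: "is_mp_inverse A Y"
  shows "X = Y"
proof -
  have Xc: "X \<in> carrier_mat n m" and Yc: "Y \<in> carrier_mat n m" using X Y A unfolding is_mp_inverse_def by auto
  note d = carrier_matD[OF A] carrier_matD[OF Xc] carrier_matD[OF Yc]
  have X1: "A * (X * A) = A" "X * (A * X) = X" "mat_adjoint X * mat_adjoint A = A * X" "mat_adjoint A * mat_adjoint X = X * A"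
    using X d unfolding is_mp_inverse_def by (auto simp: assoc2 adj_mult2)
  have Y1: "A * (Y * A) = A" "Y * (A * Y) = Y" "mat_adjoint Y * mat_adjoint A = A * Y" "mat_adjoint A * mat_adjoint Y = Y * A"
    using Y d unfolding is_mp_inverse_def by (auto simp: assoc2 adj_mult2)
  have aA1: "mat_adjoint A = mat_adjoint A * (A * Y)"
  proof -
    have "mat_adjoint A = mat_adjoint (A * (Y * A))" using Y1 by simp
    also have "\<dots> = mat_adjoint A * (mat_adjoint Y * mat_adjoint A)" using d by (simp add: adj_mult2 assoc2)
    also have "\<dots> = mat_adjoint A * (A * Y)" using Y1 by simp
    finally show ?thesis .
  qed
  have aA2: "mat_adjoint A = (X * A) * mat_adjoint A"
  proof -
    have "mat_adjoint A = mat_adjoint (A * (X * A))" using X1 by simp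
    also have "\<dots> = (mat_adjoint A * mat_adjoint X) * mat_adjoint A" using d by (simp add: adj_mult2)
    also have "\<dots> = (X * A) * mat_adjoint A" using X1 by simp
    finally show ?thesis .
  qed
  have "X = X * (A * X)" using X1 by simp
  also have "\<dots> = X * (mat_adjoint X * mat_adjoint A)" using X1 by simp
  also have "\<dots> = X * (mat_adjoint X * (mat_adjoint A * (A * Y)))" by (subst aA1, rule refl)
  also have "\<dots> = X * ((mat_adjoint X * mat_adjoint A) * (A * Y))" using d by (simp add: assoc2)
  also have "\<dots> = X * ((A * X) * (A * Y))" using X1 by simp
  also have "\<dots> = (X * (A * X)) * (A * Y)" using d by (simp add: assoc2)
  also have "\<dots> = X * (A * Y)" using X1 by simp
  finally have eX: "X = X * (A * Y)" .
  have "Y = (Y * A) * Y" using Y1 d by (simp add: assoc2)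
  also have "\<dots> = (mat_adjoint A * mat_adjoint Y) * Y" using Y1 by simp
  also have "\<dots> = (((X * A) * mat_adjoint A) * mat_adjoint Y) * Y" by (subst aA2, rule refl)
  also have "\<dots> = (X * A) * ((mat_adjoint A * mat_adjoint Y) * Y)" using d by (simp add: assoc2)
  also have "\<dots> = X * (A * Y)" using Y1 d by (simp add: assoc2)
  finally show ?thesis using eX by simp
qed

lemma mp_inverse_eq: "A \<in> carrier_mat m n \<Longrightarrow> is_mp_inverse A X \<Longrightarrow> mp_inverse A = X"
  unfolding mp_inverse_def using mp_unique by blast

lemma mp_transfer: assumes D: "D \<in> carrier_mat m n" and Dp: "is_mp_inverse D P"
  and U: "unitary_mat m U" and V: "unitary_mat n V"
  shows "is_mp_inverse (U * D * mat_adjoint V) (V * P * mat_adjoint U)"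
proof -
  have Pc: "P \<in> carrier_mat n m" using Dp D unfolding is_mp_inverse_def by auto
  note u = unitaryD[OF U] unitaryD[OF V]
  note d = carrier_matD[OF D] carrier_matD[OF Pc] carrier_matD[OF u(1)] carrier_matD[OF u(5)]
       carrier_matD[OF u(2)] carrier_matD[OF u(6)]
  have cU: "\<And>Z. dim_row Z = m \<Longrightarrow> mat_adjoint U * (U * Z) = Z"
    using u d by (simp add: assoc2[symmetric])
  have cV: "\<And>Z. dim_row Z = n \<Longrightarrow> mat_adjoint V * (V * Z) = Z"
    using u d by (simp add: assoc2[symmetric])
  have P1: "D * (P * D) = D" "P * (D * P) = P" "mat_adjoint P * mat_adjoint D = D * P" "mat_adjoint D * mat_adjoint P = P * D"
    using Dp d unfolding is_mp_inverse_def by (auto simp: assoc2 adj_mult2)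
  have "U * D * mat_adjoint V * (V * P * mat_adjoint U) * (U * D * mat_adjoint V) = U * (D * (P * D)) * mat_adjoint V"
    using d by (simp add: assoc2 cU cV)
  moreover have "V * P * mat_adjoint U * (U * D * mat_adjoint V) * (V * P * mat_adjoint U) = V * (P * (D * P)) * mat_adjoint U"
    using d by (simp add: assoc2 cU cV)
  moreover have "mat_adjoint (U * D * mat_adjoint V * (V * P * mat_adjoint U)) = U * D * mat_adjoint V * (V * P * mat_adjoint U)"
    using d P1 by (simp add: assoc2 cU cV adj_mult2)
  moreover have "mat_adjoint (V * P * mat_adjoint U * (U * D * mat_adjoint V)) = V * P * mat_adjoint U * (U * D * mat_adjoint V)"
    using d P1 by (simp add: assoc2 cU cV adj_mult2)
  ultimately show ?thesis using P1 d unfolding is_mp_inverse_def by (auto intro!: carrier_matI)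
qed



lemma gd_cong: "(\<And>i. i < r \<Longrightarrow> d i = e i) \<Longrightarrow> gd m n r d = gd m n r e"
  unfolding gd_def by (intro eq_matI, auto)

lemma gd_pinv: assumes "r \<le> m" "r \<le> n" and nz: "\<And>i. i < r \<Longrightarrow> d i \<noteq> 0"
  shows "is_mp_inverse (gd m n r d) (gd n m r (\<lambda>i. inverse (d i)))"
proof -
  have e1: "gd m n r d * gd n m r (\<lambda>i. inverse (d i)) = gd m m r (\<lambda>i. 1)"
    using assms by (simp add: gd_mult_gd, intro gd_cong, simp)
  have e2: "gd n m r (\<lambda>i. inverse (d i)) * gd m n r d = gd n n r (\<lambda>i. 1)"
    using assms by (simp add: gd_mult_gd, intro gd_cong, simp)
  show ?thesis unfolding is_mp_inverse_def e1 e2 using assms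
    by (simp add: gd_mult_gd gd_adj)
qed

lemma svd_pinv: assumes U: "unitary_mat m U" and V: "unitary_mat n V" and r: "r \<le> m" "r \<le> n"
  and pos: "\<forall>i<r. 0 < \<sigma> i" and A: "A = U * sv_block m n r \<sigma> * mat_adjoint V"
  shows "mp_inverse A = V * gd n m r (\<lambda>i. complex_of_real (1 / \<sigma> i)) * mat_adjoint U"
proof -
  have "is_mp_inverse (gd m n r (\<lambda>i. complex_of_real (\<sigma> i))) (gd n m r (\<lambda>i. inverse (complex_of_real (\<sigma> i))))"
  proof (rule gd_pinv[OF r])
    fix i assume "i < r" hence "0 < \<sigma> i" using pos by blast
    thus "complex_of_real (\<sigma> i) \<noteq> 0" by simp
  qed
  also have "gd n m r (\<lambda>i. inverse (complex_of_real (\<sigma> i))) = gd n m r (\<lambda>i. complex_of_real (1 / \<sigma> i))"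
    by (intro gd_cong, simp add: divide_inverse)
  finally have pi: "is_mp_inverse (gd m n r (\<lambda>i. complex_of_real (\<sigma> i))) (gd n m r (\<lambda>i. complex_of_real (1 / \<sigma> i)))" .
  have "is_mp_inverse (U * gd m n r (\<lambda>i. complex_of_real (\<sigma> i)) * mat_adjoint V) (V * gd n m r (\<lambda>i. complex_of_real (1 / \<sigma> i)) * mat_adjoint U)"
    by (rule mp_transfer[OF gd_carrier pi U V])
  moreover have A': "A = U * gd m n r (\<lambda>i. complex_of_real (\<sigma> i)) * mat_adjoint V"
    using A sv_block_gd[OF r] by simp
  ultimately have mpA: "is_mp_inverse A (V * gd n m r (\<lambda>i. complex_of_real (1 / \<sigma> i)) * mat_adjoint U)"
    by simp
  have Ac: "A \<in> carrier_mat m n" unfolding A'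
    by (rule carr3[OF unitaryD(1)[OF U] gd_carrier unitaryD(2)[OF V]])
  show ?thesis by (rule mp_inverse_eq[OF Ac mpA])
qed



lemma vnorm_L2: "vnorm x = L2_set (\<lambda>i. cmod (x $ i)) {..<dim_vec x}"
  unfolding vnorm_def L2_set_def by simp

lemma vnorm_mult_bound: assumes M: "M \<in> carrier_mat k l" and x: "x \<in> carrier_vec l" and x1: "vnorm x \<le> 1"
  shows "vnorm (M *\<^sub>v x) \<le> (\<Sum>i<k. \<Sum>j<l. cmod (M $$ (i,j)))"
proof -
  have xi: "cmod (x $ j) \<le> 1" if "j < l" for j
  proof -
    have "cmod (x $ j) \<le> vnorm x" unfolding vnorm_L2
      by (rule member_le_L2_set, insert x that, auto)
    thus ?thesis using x1 by simp
  qed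
  have "vnorm (M *\<^sub>v x) \<le> (\<Sum>i<dim_vec (M *\<^sub>v x). \<bar>cmod ((M *\<^sub>v x) $ i)\<bar>)"
    unfolding vnorm_L2 by (rule L2_set_le_sum_abs)
  also have "\<dots> = (\<Sum>i<k. cmod ((M *\<^sub>v x) $ i))" using M by simp
  also have "\<dots> \<le> (\<Sum>i<k. \<Sum>j<l. cmod (M $$ (i,j)))"
  proof (intro sum_mono)
    fix i assume i: "i \<in> {..<k}"
    have "(M *\<^sub>v x) $ i = (\<Sum>j<l. M $$ (i,j) * x $ j)"
      using M x i by (auto simp: scalar_prod_def lessThan_atLeast0 intro!: sum.cong)
    also have "cmod \<dots> \<le> (\<Sum>j<l. cmod (M $$ (i,j) * x $ j))" by (rule norm_sum)
    also have "\<dots> \<le> (\<Sum>j<l. cmod (M $$ (i,j)))"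
      by (intro sum_mono, simp add: norm_mult, insert xi, auto intro: mult_left_le)
    finally show "cmod ((M *\<^sub>v x) $ i) \<le> (\<Sum>j<l. cmod (M $$ (i,j)))" .
  qed
  finally show ?thesis .
qed

lemma spec_ge: assumes M: "M \<in> carrier_mat k l" and x: "x \<in> carrier_vec l" and x1: "vnorm x \<le> 1"
  shows "vnorm (M *\<^sub>v x) \<le> spec_norm M"
  unfolding spec_norm_def
proof (rule cSup_upper)
  show "vnorm (M *\<^sub>v x) \<in> {vnorm (M *\<^sub>v x) |x. x \<in> carrier_vec (dim_col M) \<and> vnorm x \<le> 1}"
    using M x x1 by auto
  show "bdd_above {vnorm (M *\<^sub>v x) |x. x \<in> carrier_vec (dim_col M) \<and> vnorm x \<le> 1}"
    unfolding bdd_above_def using vnorm_mult_bound[OF M] M by auto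
qed

lemma spec_nonneg: assumes M: "M \<in> carrier_mat k l" shows "0 \<le> spec_norm M"
proof -
  have "0 \<le> vnorm (M *\<^sub>v 0\<^sub>v l)" unfolding vnorm_L2 by (rule L2_set_nonneg)
  also have "\<dots> \<le> spec_norm M" by (rule spec_ge[OF M], auto simp: vnorm_def)
  finally show ?thesis .
qed

lemma unitary_col_sum: assumes W: "unitary_mat k W" and j: "j < k"
  shows "(\<Sum>i<k. (cmod (W $$ (i,j)))\<^sup>2) = 1"
proof -
  note u = unitaryD[OF W]
  have e1: "(mat_adjoint W * W) $$ (j,j) = 1" using u(4) j by simp
  have "(mat_adjoint W * W) $$ (j,j) = (\<Sum>i<k. cnj (W $$ (i,j)) * W $$ (i,j))"
    using u(1) j by (simp add: scalar_prod_def lessThan_atLeast0)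
  hence "(\<Sum>i<k. cnj (W $$ (i,j)) * W $$ (i,j)) = 1" using e1 by simp
  hence "complex_of_real (\<Sum>i<k. (cmod (W $$ (i,j)))\<^sup>2) = 1"
    by (simp add: cnorm_sq mult.commute)
  thus ?thesis by (metis of_real_eq_1_iff)
qed

lemma vnorm_col_scaled: assumes W: "unitary_mat k W" and j: "j < k"
  shows "vnorm (vec k (\<lambda>i. W $$ (i,j) * c)) = cmod c"
proof -
  have "vnorm (vec k (\<lambda>i. W $$ (i,j) * c)) = sqrt ((\<Sum>i<k. (cmod (W $$ (i,j)))\<^sup>2) * (cmod c)\<^sup>2)"
    unfolding vnorm_def by (simp add: norm_mult power_mult_distrib sum_distrib_right)
  thus ?thesis using unitary_col_sum[OF W j] by simp
qed

lemma vnorm_col: assumes W: "unitary_mat k W" and j: "j < k"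
  shows "vnorm (col W j) = 1"
proof -
  have "col W j = vec k (\<lambda>i. W $$ (i,j) * 1)" using unitaryD[OF W] j by (intro eq_vecI, auto)
  thus ?thesis using vnorm_col_scaled[OF W j, of 1] by simp
qed

lemma spec_svd: assumes U: "unitary_mat m U" and V: "unitary_mat n V" and r: "r \<le> m" "r \<le> n"
  and j: "j < r"
  shows "cmod (d j) \<le> spec_norm (U * gd m n r d * mat_adjoint V)"
proof -
  note u = unitaryD[OF U] unitaryD[OF V]
  let ?M = "U * gd m n r d * mat_adjoint V"
  have Mc: "?M \<in> carrier_mat m n" by (rule carr3[OF u(1) gd_carrier u(6)])
  have jn: "j < n" "j < m" using j r by auto
  have "?M * V = U * gd m n r d * (mat_adjoint V * V)"
    using carrier_matD[OF u(1)] carrier_matD[OF u(2)] carrier_matD[OF u(5)] carrier_matD[OF u(6)] by (simp add: assoc2)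
  also have "\<dots> = U * gd m n r d" using u(8) u(1) by simp
  also have "\<dots> = mat m n (\<lambda>(i,j). if j < r then U $$ (i,j) * d j else 0)"
    by (rule gd_mult_right[OF u(1) r])
  finally have MV: "?M * V = mat m n (\<lambda>(i,j). if j < r then U $$ (i,j) * d j else 0)" .
  have "?M *\<^sub>v col V j = col (?M * V) j" by (rule col_mult2[OF Mc u(5) jn(1), symmetric])
  also have "\<dots> = vec m (\<lambda>i. U $$ (i,j) * d j)" unfolding MV using j jn by (intro eq_vecI, auto)
  finally have "vnorm (?M *\<^sub>v col V j) = cmod (d j)" using vnorm_col_scaled[OF U jn(2)] by simp
  moreover have "vnorm (?M *\<^sub>v col V j) \<le> spec_norm ?M"
  proof (rule spec_ge[OF Mc])
    show "col V j \<in> carrier_vec n" using carrier_matD[OF u(5)] by (intro carrier_vecI, simp)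
    show "vnorm (col V j) \<le> 1" using vnorm_col[OF V jn(1)] by simp
  qed
  ultimately show ?thesis by simp
qed



lemma sv_bounds: assumes U: "unitary_mat m U" and V: "unitary_mat n V" and r: "r \<le> m" "r \<le> n"
  and pos: "\<forall>i<r. 0 < \<sigma> i" and mono: "\<forall>i j. i \<le> j \<longrightarrow> j < r \<longrightarrow> \<sigma> j \<le> \<sigma> i"
  and j: "j < r"
  shows "(1 / \<sigma> j)\<^sup>2 \<le> (spec_norm (V * gd n m r (\<lambda>i. complex_of_real (1 / \<sigma> i)) * mat_adjoint U))\<^sup>2"
    "1 / (spec_norm (U * sv_block m n r \<sigma> * mat_adjoint V))\<^sup>2 \<le> (1 / \<sigma> j)\<^sup>2"
proof -
  have r0: "r - 1 < r" "0 < r" using j by auto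
  have p1: "0 < \<sigma> (r - 1)" using pos r0 by blast
  have p0: "0 < \<sigma> 0" using pos r0 by blast
  have pj: "0 < \<sigma> j" using pos j by blast
  have h1: "cmod (complex_of_real (1 / \<sigma> (r-1))) \<le> spec_norm (V * gd n m r (\<lambda>i. complex_of_real (1 / \<sigma> i)) * mat_adjoint U)"
    by (rule spec_svd[OF V U r(2,1) r0(1)])
  have eq1: "cmod (complex_of_real (1 / \<sigma> (r-1))) = 1 / \<sigma> (r-1)"
    unfolding norm_of_real using p1 by simp
  have a1: "1 / \<sigma> (r-1) \<le> spec_norm (V * gd n m r (\<lambda>i. complex_of_real (1 / \<sigma> i)) * mat_adjoint U)"
    using h1 unfolding eq1 .
  have "\<sigma> (r - 1) \<le> \<sigma> j" using mono j r0 by auto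
  hence a2: "1 / \<sigma> j \<le> 1 / \<sigma> (r - 1)" using p1 pj
    by (simp add: divide_simps)
  have a3: "0 \<le> 1 / \<sigma> j" using pj by simp
  show "(1 / \<sigma> j)\<^sup>2 \<le> (spec_norm (V * gd n m r (\<lambda>i. complex_of_real (1 / \<sigma> i)) * mat_adjoint U))\<^sup>2"
    by (rule power_mono[OF order_trans[OF a2 a1] a3])
  have h2: "cmod (complex_of_real (\<sigma> 0)) \<le> spec_norm (U * gd m n r (\<lambda>i. complex_of_real (\<sigma> i)) * mat_adjoint V)"
    by (rule spec_svd[OF U V r r0(2)])
  have eq2: "cmod (complex_of_real (\<sigma> 0)) = \<sigma> 0"
    unfolding norm_of_real using p0 by simp
  have b1: "\<sigma> 0 \<le> spec_norm (U * sv_block m n r \<sigma> * mat_adjoint V)"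
    using h2 unfolding eq2 sv_block_gd[OF r] .
  have b2: "\<sigma> j \<le> \<sigma> 0" using mono j by auto
  have b3: "(\<sigma> j)\<^sup>2 \<le> (spec_norm (U * sv_block m n r \<sigma> * mat_adjoint V))\<^sup>2"
    by (rule power_mono[OF order_trans[OF b2 b1]], insert pj, simp)
  have b4: "0 < (\<sigma> j)\<^sup>2" using pj by simp
  have "1 / (spec_norm (U * sv_block m n r \<sigma> * mat_adjoint V))\<^sup>2 \<le> 1 / (\<sigma> j)\<^sup>2"
    by (rule divide_left_mono[OF b3], simp, rule mult_pos_pos[OF less_le_trans[OF b4 b3] b4])
  thus "1 / (spec_norm (U * sv_block m n r \<sigma> * mat_adjoint V))\<^sup>2 \<le> (1 / \<sigma> j)\<^sup>2"
    by (simp add: power_one_over)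
qed

lemma sum_if_lt: "s \<le> (n::nat) \<Longrightarrow> (\<Sum>i<n. if i < s then f i else 0) = (\<Sum>i<s. f i)"
  by (rule sum.mono_neutral_cong_right, auto)

lemma sum_if_ge: "(\<Sum>i<(n::nat). if \<not> i < s then f i else 0) = (\<Sum>i\<in>{s..<n}. f i)"
  by (rule sum.mono_neutral_cong_right, auto)

lemma sum_shift: "r \<le> (m::nat) \<Longrightarrow> (\<Sum>j<m - r. f (r + j)) = (\<Sum>j\<in>{r..<m}. f j)"
proof -
  assume "r \<le> m"
  have "(\<Sum>j\<in>{0..<m-r}. f (j + r)) = sum f {0 + r..<m - r + r}" by (rule sum.shift_bounds_nat_ivl[symmetric])
  thus ?thesis using \<open>r \<le> m\<close> by (simp add: lessThan_atLeast0 add.commute)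
qed



lemma main_identity:
  fixes U V Ut Vt :: "complex mat" and a d bt dt :: "nat \<Rightarrow> complex"
  assumes U: "unitary_mat m U" and V: "unitary_mat n V"
    and Ut: "unitary_mat m Ut" and Vt: "unitary_mat n Vt"
    and rA: "r \<le> m" "r \<le> n" and sB: "s \<le> m" "s \<le> n"
  defines "S \<equiv> gd m n r a" and "Sp \<equiv> gd n m r d" and "St \<equiv> gd m n s bt" and "Stp \<equiv> gd n m s dt"
  assumes dinv: "\<And>i. i < r \<Longrightarrow> a i * d i = 1" and dtinv: "\<And>i. i < s \<Longrightarrow> dt i * bt i = 1"
  defines "A \<equiv> U * S * mat_adjoint V" and "B \<equiv> Ut * St * mat_adjoint Vt"
    and "Ap \<equiv> V * Sp * mat_adjoint U" and "Bp \<equiv> Vt * Stp * mat_adjoint Ut"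
    and "Q \<equiv> mat_adjoint Ut * U" and "W \<equiv> mat_adjoint Vt * V"
  shows "mat_adjoint Vt * (Bp - Ap) * U = mat n m (\<lambda>(i,j). (if i < s then dt i * Q $$ (i,j) else 0) - (if j < r then W $$ (i,j) * d j else 0))"
    "mat_adjoint Vt * (Bp * (B - A) * Ap) * U = mat n m (\<lambda>(i,j). if i < s \<and> j < r then W $$ (i,j) * d j - dt i * Q $$ (i,j) else 0)"
proof -
  note u = unitaryD[OF U] unitaryD[OF V] unitaryD[OF Ut] unitaryD[OF Vt]
  note c = S_def Sp_def St_def Stp_def
  note d = carrier_matD[OF u(1)] carrier_matD[OF u(5)] carrier_matD[OF u(9)] carrier_matD[OF u(13)]
       carrier_matD[OF u(2)] carrier_matD[OF u(6)] carrier_matD[OF u(10)] carrier_matD[OF u(14)]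
  have cU: "\<And>Z. dim_row Z = m \<Longrightarrow> mat_adjoint U * (U * Z) = Z"
    using u d by (simp add: assoc2[symmetric])
  have cV: "\<And>Z. dim_row Z = n \<Longrightarrow> mat_adjoint V * (V * Z) = Z"
    using u d by (simp add: assoc2[symmetric])
  have cUt: "\<And>Z. dim_row Z = m \<Longrightarrow> mat_adjoint Ut * (Ut * Z) = Z"
    using u d by (simp add: assoc2[symmetric])
  have cVt: "\<And>Z. dim_row Z = n \<Longrightarrow> mat_adjoint Vt * (Vt * Z) = Z"
    using u d by (simp add: assoc2[symmetric])
  have Qc: "Q \<in> carrier_mat m m" unfolding Q_def by (rule mult_carrier_mat[OF u(10) u(1)])
  have Wc: "W \<in> carrier_mat n n" unfolding W_def by (rule mult_carrier_mat[OF u(14) u(5)])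
  have Apc: "Ap \<in> carrier_mat n m" unfolding Ap_def c by (rule carr3[OF u(5) gd_carrier u(2)])
  have Bpc: "Bp \<in> carrier_mat n m" unfolding Bp_def c by (rule carr3[OF u(13) gd_carrier u(10)])
  have Ac: "A \<in> carrier_mat m n" unfolding A_def c by (rule carr3[OF u(1) gd_carrier u(6)])
  have Bc: "B \<in> carrier_mat m n" unfolding B_def c by (rule carr3[OF u(9) gd_carrier u(14)])
  have e1: "mat_adjoint Vt * Bp * U = Stp * Q" unfolding Bp_def Q_def c using d u(4) u(8) u(12) u(16) by (simp add: assoc2 cVt)
  have e2: "mat_adjoint Vt * Ap * U = W * Sp" unfolding Ap_def W_def c using d u(4) u(8) u(12) u(16) by (simp add: assoc2 cU)
  have "mat_adjoint Vt * (Bp - Ap) * U = mat_adjoint Vt * Bp * U - mat_adjoint Vt * Ap * U"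
    using u Apc Bpc
    by (simp add: mult_minus_distrib_mat[OF u(14) Bpc Apc],
        intro minus_mult_distrib_mat[of _ n m], auto)
  also have "\<dots> = Stp * Q - W * Sp" unfolding e1 e2 ..
  also have "\<dots> = mat n m (\<lambda>(i,j). (if i < s then dt i * Q $$ (i,j) else 0) - (if j < r then W $$ (i,j) * d j else 0))"
    unfolding Stp_def Sp_def using Qc Wc rA sB
    by (simp add: gd_mult_left[OF Qc] gd_mult_right[OF Wc], intro eq_matI, auto)
  finally show "mat_adjoint Vt * (Bp - Ap) * U = mat n m (\<lambda>(i,j). (if i < s then dt i * Q $$ (i,j) else 0) - (if j < r then W $$ (i,j) * d j else 0))" .
  have e3: "mat_adjoint Vt * (Bp * B * Ap) * U = (Stp * St) * (W * Sp)"
    unfolding Bp_def B_def Ap_def W_def c using d u(4) u(8) u(12) u(16) by (simp add: assoc2 cVt cUt cV)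
  have e4: "mat_adjoint Vt * (Bp * A * Ap) * U = Stp * (Q * (S * Sp))"
    unfolding Bp_def A_def Ap_def Q_def c using d u(4) u(8) u(12) u(16) by (simp add: assoc2 cVt cUt cV)
  have "mat_adjoint Vt * (Bp * (B - A) * Ap) * U = mat_adjoint Vt * (Bp * B * Ap) * U - mat_adjoint Vt * (Bp * A * Ap) * U"
  proof -
    have XC: "Bp * B * Ap \<in> carrier_mat n m" by (rule carr3[OF Bpc Bc Apc])
    have YC: "Bp * A * Ap \<in> carrier_mat n m" by (rule carr3[OF Bpc Ac Apc])
    have "Bp * (B - A) * Ap = (Bp * B - Bp * A) * Ap"
      by (subst mult_minus_distrib_mat[OF Bpc Bc Ac], rule refl)
    also have "\<dots> = Bp * B * Ap - Bp * A * Ap"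
      by (rule minus_mult_distrib_mat[OF mult_carrier_mat[OF Bpc Bc] mult_carrier_mat[OF Bpc Ac] Apc])
    finally have "Bp * (B - A) * Ap = Bp * B * Ap - Bp * A * Ap" .
    moreover have "mat_adjoint Vt * (Bp * B * Ap - Bp * A * Ap) = mat_adjoint Vt * (Bp * B * Ap) - mat_adjoint Vt * (Bp * A * Ap)"
      by (rule mult_minus_distrib_mat[OF u(14) XC YC])
    moreover have "(mat_adjoint Vt * (Bp * B * Ap) - mat_adjoint Vt * (Bp * A * Ap)) * U = mat_adjoint Vt * (Bp * B * Ap) * U - mat_adjoint Vt * (Bp * A * Ap) * U"
      by (rule minus_mult_distrib_mat[OF mult_carrier_mat[OF u(14) XC] mult_carrier_mat[OF u(14) YC] u(1)])
    ultimately show ?thesis by simp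
  qed
  also have "\<dots> = gd n n s (\<lambda>i. 1) * (W * Sp) - Stp * (Q * gd m m r (\<lambda>i. 1))"
    unfolding e3 e4 unfolding c using rA sB dinv dtinv
    by (simp add: gd_mult_gd, intro arg_cong2[where f = "(-)"] arg_cong2[where f = "(*)"] refl gd_cong, auto)
  also have "\<dots> = mat n m (\<lambda>(i,j). if i < s \<and> j < r then W $$ (i,j) * d j - dt i * Q $$ (i,j) else 0)"
  proof -
    have WS: "W * Sp = mat n m (\<lambda>(i,j). if j < r then W $$ (i,j) * d j else 0)"
      unfolding Sp_def by (rule gd_mult_right[OF Wc rA(2) rA(1)])
    have QI: "Q * gd m m r (\<lambda>i. 1) = mat m m (\<lambda>(i,j). if j < r then Q $$ (i,j) * 1 else 0)"
      by (rule gd_mult_right[OF Qc rA(1) rA(1)])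
    show ?thesis unfolding WS QI Stp_def
      unfolding gd_mult_left[OF mat_carrier sB(2) sB(2)] gd_mult_left[OF mat_carrier sB(2) sB(1)]
      by (intro eq_matI, insert sB rA, auto)
  qed
  finally show "mat_adjoint Vt * (Bp * (B - A) * Ap) * U = mat n m (\<lambda>(i,j). if i < s \<and> j < r then W $$ (i,j) * d j - dt i * Q $$ (i,j) else 0)" .
qed



lemma col_block_dims[simp]: "dim_row (col_block M a b) = dim_row M" "dim_col (col_block M a b) = b - a"
  unfolding col_block_def by auto

lemma col_block_index[simp]: "i < dim_row M \<Longrightarrow> j < b - a \<Longrightarrow> col_block M a b $$ (i,j) = M $$ (i, a + j)"
  unfolding col_block_def by auto

lemma adj_block_prod: assumes X: "X \<in> carrier_mat k k1" and Y: "Y \<in> carrier_mat k k2"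
  and i: "i < b1 - a1" and j: "j < b2 - a2" and b: "b1 \<le> k1" "b2 \<le> k2"
  shows "(mat_adjoint (col_block X a1 b1) * col_block Y a2 b2) $$ (i,j) = (mat_adjoint X * Y) $$ (a1 + i, a2 + j)"
  using X Y i j b by (auto simp: scalar_prod_def intro!: sum.cong)

lemma sq_div: "(cmod (z / complex_of_real x))\<^sup>2 = (1 / x)\<^sup>2 * (cmod z)\<^sup>2"
  by (simp add: norm_divide power_divide)

lemma half:
  fixes A B U V Ut Vt :: "complex mat" and m n r s :: nat and \<sigma> \<sigma>t :: "nat \<Rightarrow> real"
  assumes rA: "r \<le> m" "r \<le> n" and sB: "s \<le> m" "s \<le> n"
    and U: "unitary_mat m U" and V: "unitary_mat n V"
    and Ut: "unitary_mat m Ut" and Vt: "unitary_mat n Vt"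
    and \<sigma>_pos: "\<forall>i<r. 0 < \<sigma> i" and \<sigma>_mono: "\<forall>i j. i \<le> j \<longrightarrow> j < r \<longrightarrow> \<sigma> j \<le> \<sigma> i"
    and \<sigma>t_pos: "\<forall>i<s. 0 < \<sigma>t i" and \<sigma>t_mono: "\<forall>i j. i \<le> j \<longrightarrow> j < s \<longrightarrow> \<sigma>t j \<le> \<sigma>t i"
    and svdA: "A = U * sv_block m n r \<sigma> * mat_adjoint V"
    and svdB: "B = Ut * sv_block m n s \<sigma>t * mat_adjoint Vt"
  shows "fro2 (mp_inverse B - mp_inverse A) \<le>
       (spec_norm (mp_inverse B))\<^sup>2 * fro2 (mat_adjoint (col_block Ut 0 s) * col_block U r m)
     + (spec_norm (mp_inverse A))\<^sup>2 * fro2 (mat_adjoint (col_block Vt s n) * col_block V 0 r)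
     + fro2 (mp_inverse B * (B - A) * mp_inverse A)"
   "fro2 (mat_adjoint (col_block Ut 0 s) * col_block U r m) / (spec_norm B)\<^sup>2
     + fro2 (mat_adjoint (col_block Vt s n) * col_block V 0 r) / (spec_norm A)\<^sup>2
     + fro2 (mp_inverse B * (B - A) * mp_inverse A) \<le> fro2 (mp_inverse B - mp_inverse A)"
proof -
  note u = unitaryD[OF U] unitaryD[OF V] unitaryD[OF Ut] unitaryD[OF Vt]
  define d where "d = (\<lambda>i. complex_of_real (1 / \<sigma> i))"
  define dt where "dt = (\<lambda>i. complex_of_real (1 / \<sigma>t i))"
  define a where "a = (\<lambda>i. complex_of_real (\<sigma> i))"
  define bt where "bt = (\<lambda>i. complex_of_real (\<sigma>t i))"
  define Q where "Q = mat_adjoint Ut * U"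
  define W where "W = mat_adjoint Vt * V"
  have Qc: "Q \<in> carrier_mat m m" unfolding Q_def by (rule mult_carrier_mat[OF u(10) u(1)])
  have Wc: "W \<in> carrier_mat n n" unfolding W_def by (rule mult_carrier_mat[OF u(14) u(5)])
  have Ap: "mp_inverse A = V * gd n m r d * mat_adjoint U"
    unfolding d_def by (rule svd_pinv[OF U V rA \<sigma>_pos svdA])
  have Bp: "mp_inverse B = Vt * gd n m s dt * mat_adjoint Ut"
    unfolding dt_def by (rule svd_pinv[OF Ut Vt sB \<sigma>t_pos svdB])
  have A': "A = U * gd m n r a * mat_adjoint V" unfolding svdA a_def sv_block_gd[OF rA] ..
  have B': "B = Ut * gd m n s bt * mat_adjoint Vt" unfolding svdB bt_def sv_block_gd[OF sB] ..
  have ad: "a i * d i = 1" if i: "i < r" for i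
  proof -
    have "0 < \<sigma> i" using \<sigma>_pos i by blast
    thus ?thesis unfolding a_def d_def of_real_mult[symmetric] by simp
  qed
  have bd: "dt i * bt i = 1" if i: "i < s" for i
  proof -
    have "0 < \<sigma>t i" using \<sigma>t_pos i by blast
    thus ?thesis unfolding bt_def dt_def of_real_mult[symmetric] by simp
  qed
  note MI0 = main_identity[OF U V Ut Vt rA sB, where a = a and d = d and bt = bt and dt = dt, OF ad bd]
  have MI1: "mat_adjoint Vt * (mp_inverse B - mp_inverse A) * U = mat n m (\<lambda>(i,j). (if i < s then dt i * Q $$ (i,j) else 0) - (if j < r then W $$ (i,j) * d j else 0))"
    unfolding Ap Bp unfolding Q_def W_def by (rule MI0(1))
  have MI2: "mat_adjoint Vt * (mp_inverse B * (B - A) * mp_inverse A) * U = mat n m (\<lambda>(i,j). if i < s \<and> j < r then W $$ (i,j) * d j - dt i * Q $$ (i,j) else 0)"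
    unfolding Ap Bp unfolding A' B' Q_def W_def by (rule MI0(2))
  note MI = MI1 MI2
  have Apc: "mp_inverse A \<in> carrier_mat n m" unfolding Ap by (rule carr3[OF u(5) gd_carrier u(2)])
  have Bpc: "mp_inverse B \<in> carrier_mat n m" unfolding Bp by (rule carr3[OF u(13) gd_carrier u(10)])
  have Ac: "A \<in> carrier_mat m n" unfolding A' by (rule carr3[OF u(1) gd_carrier u(6)])
  have Bc: "B \<in> carrier_mat m n" unfolding B' by (rule carr3[OF u(9) gd_carrier u(14)])
  have inv: "fro2 (mat_adjoint Vt * M * U) = fro2 M" if M: "M \<in> carrier_mat n m" for M
  proof -
    have "fro2 (mat_adjoint Vt * M * U) = fro2 (mat_adjoint Vt * M)"
      by (rule fro2_right[of _ n m _ m], insert M u, auto)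
    also have "\<dots> = fro2 M"
      by (rule fro2_left[OF M u(14)], insert u, simp)
    finally show ?thesis .
  qed
  define P where "P = mat n m (\<lambda>(i,j). (if i < s then dt i * Q $$ (i,j) else 0) - (if j < r then W $$ (i,j) * d j else 0))"
  define R where "R = mat n m (\<lambda>(i,j). if i < s \<and> j < r then W $$ (i,j) * d j - dt i * Q $$ (i,j) else 0)"
  have fP: "fro2 (mp_inverse B - mp_inverse A) = fro2 P"
    using inv[OF minus_carrier_mat[OF Apc, of "mp_inverse B"]] MI(1) unfolding P_def by simp
  have fR: "fro2 (mp_inverse B * (B - A) * mp_inverse A) = fro2 R"
    using inv[OF carr3[OF Bpc minus_carrier_mat[OF Ac, of B] Apc]] MI(2) unfolding R_def by simp
  define g1 where "g1 = (\<lambda>i j. if i < s \<and> \<not> j < r then (cmod (Q $$ (i,j)))\<^sup>2 * (1 / \<sigma>t i)\<^sup>2 else 0)"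
  define g2 where "g2 = (\<lambda>i j. if \<not> i < s \<and> j < r then (cmod (W $$ (i,j)))\<^sup>2 * (1 / \<sigma> j)\<^sup>2 else 0)"
  have pw: "(cmod (P $$ (i,j)))\<^sup>2 = (cmod (R $$ (i,j)))\<^sup>2 + g1 i j + g2 i j" if ij: "i < n" "j < m" for i j
  proof -
    have "cmod (dt i * Q $$ (i,j) - W $$ (i,j) * d j) = cmod (W $$ (i,j) * d j - dt i * Q $$ (i,j))"
      by (rule norm_minus_commute)
    thus ?thesis using ij unfolding P_def R_def g1_def g2_def
      by (auto simp: dt_def d_def sq_div)
  qed
  have fPR: "fro2 P = fro2 R + (\<Sum>i<n. \<Sum>j<m. g1 i j) + (\<Sum>i<n. \<Sum>j<m. g2 i j)"
    unfolding fro2_def using pw by (simp add: P_def R_def sum.distrib)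
  have G1: "(\<Sum>i<n. \<Sum>j<m. g1 i j) = (\<Sum>i<s. \<Sum>j\<in>{r..<m}. (cmod (Q $$ (i,j)))\<^sup>2 * (1 / \<sigma>t i)\<^sup>2)"
  proof -
    have "(\<Sum>i<n. \<Sum>j<m. g1 i j) = (\<Sum>i<n. if i < s then (\<Sum>j<m. if \<not> j < r then (cmod (Q $$ (i,j)))\<^sup>2 * (1 / \<sigma>t i)\<^sup>2 else 0) else 0)"
      unfolding g1_def by (intro sum.cong refl, auto)
    thus ?thesis using sB by (simp add: sum_if_lt sum_if_ge)
  qed
  have G2: "(\<Sum>i<n. \<Sum>j<m. g2 i j) = (\<Sum>i\<in>{s..<n}. \<Sum>j<r. (cmod (W $$ (i,j)))\<^sup>2 * (1 / \<sigma> j)\<^sup>2)"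
  proof -
    have "(\<Sum>i<n. \<Sum>j<m. g2 i j) = (\<Sum>i<n. if \<not> i < s then (\<Sum>j<m. if j < r then (cmod (W $$ (i,j)))\<^sup>2 * (1 / \<sigma> j)\<^sup>2 else 0) else 0)"
      unfolding g2_def by (intro sum.cong refl, auto)
    thus ?thesis using rA by (simp add: sum_if_lt sum_if_ge)
  qed
  have K1: "fro2 (mat_adjoint (col_block Ut 0 s) * col_block U r m) = (\<Sum>i<s. \<Sum>j\<in>{r..<m}. (cmod (Q $$ (i,j)))\<^sup>2)"
  proof -
    have "fro2 (mat_adjoint (col_block Ut 0 s) * col_block U r m) = (\<Sum>i<s. \<Sum>j<m - r. (cmod (Q $$ (i,r + j)))\<^sup>2)"
    proof -
      have dr: "dim_row (mat_adjoint (col_block Ut 0 s) * col_block U r m) = s"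
        and dc: "dim_col (mat_adjoint (col_block Ut 0 s) * col_block U r m) = m - r"
        using carrier_matD[OF u(9)] carrier_matD[OF u(1)] by simp_all
      have ent: "(mat_adjoint (col_block Ut 0 s) * col_block U r m) $$ (i,j) = Q $$ (i, r + j)"
        if "i < s" "j < m - r" for i j
        by (rule trans[OF adj_block_prod[OF u(9) u(1)]], insert that sB, auto simp: Q_def)
      show ?thesis unfolding fro2_def dr dc by (intro sum.cong refl, simp add: ent del: index_mult_mat)
    qed
    moreover have "(\<Sum>j<m - r. (cmod (Q $$ (i, r + j)))\<^sup>2) = (\<Sum>j\<in>{r..<m}. (cmod (Q $$ (i, j)))\<^sup>2)" for i
      by (rule sum_shift[OF rA(1)])
    ultimately show ?thesis by simp
  qed
  have K2: "fro2 (mat_adjoint (col_block Vt s n) * col_block V 0 r) = (\<Sum>i\<in>{s..<n}. \<Sum>j<r. (cmod (W $$ (i,j)))\<^sup>2)"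
  proof -
    have "fro2 (mat_adjoint (col_block Vt s n) * col_block V 0 r) = (\<Sum>i<n - s. \<Sum>j<r. (cmod (W $$ (s + i, j)))\<^sup>2)"
    proof -
      have dr: "dim_row (mat_adjoint (col_block Vt s n) * col_block V 0 r) = n - s"
        and dc: "dim_col (mat_adjoint (col_block Vt s n) * col_block V 0 r) = r"
        using carrier_matD[OF u(13)] carrier_matD[OF u(5)] by simp_all
      have ent: "(mat_adjoint (col_block Vt s n) * col_block V 0 r) $$ (i,j) = W $$ (s + i, j)"
        if "i < n - s" "j < r" for i j
        by (rule trans[OF adj_block_prod[OF u(13) u(5)]], insert that rA, auto simp: W_def)
      show ?thesis unfolding fro2_def dr dc by (intro sum.cong refl, simp add: ent del: index_mult_mat)
    qed
    moreover have "(\<Sum>i<n - s. \<Sum>j<r. (cmod (W $$ (s + i, j)))\<^sup>2) = (\<Sum>i\<in>{s..<n}. \<Sum>j<r. (cmod (W $$ (i, j)))\<^sup>2)"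
      by (rule sum_shift[OF sB(2)])
    ultimately show ?thesis by simp
  qed
  have Bpe: "mp_inverse B = Vt * gd n m s (\<lambda>i. complex_of_real (1 / \<sigma>t i)) * mat_adjoint Ut" using Bp dt_def by simp
  have Ape: "mp_inverse A = V * gd n m r (\<lambda>i. complex_of_real (1 / \<sigma> i)) * mat_adjoint U" using Ap d_def by simp
  have up1: "(\<Sum>i<n. \<Sum>j<m. g1 i j) \<le> (spec_norm (mp_inverse B))\<^sup>2 * fro2 (mat_adjoint (col_block Ut 0 s) * col_block U r m)"
    unfolding G1 K1 sum_distrib_left
    by (intro sum_mono, simp only: mult.commute[of "(spec_norm _)\<^sup>2"], intro mult_left_mono,
        unfold Bpe, rule sv_bounds(1)[OF Ut Vt sB \<sigma>t_pos \<sigma>t_mono], auto)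
  have up2: "(\<Sum>i<n. \<Sum>j<m. g2 i j) \<le> (spec_norm (mp_inverse A))\<^sup>2 * fro2 (mat_adjoint (col_block Vt s n) * col_block V 0 r)"
    unfolding G2 K2 sum_distrib_left
    by (intro sum_mono, simp only: mult.commute[of "(spec_norm _)\<^sup>2"], intro mult_left_mono,
        unfold Ape, rule sv_bounds(1)[OF U V rA \<sigma>_pos \<sigma>_mono], auto)
  have pt1: "1 / (spec_norm B)\<^sup>2 \<le> (1 / \<sigma>t i)\<^sup>2" if "i < s" for i
    using sv_bounds(2)[OF Ut Vt sB \<sigma>t_pos \<sigma>t_mono that] unfolding svdB[symmetric] .
  have pt2: "1 / (spec_norm A)\<^sup>2 \<le> (1 / \<sigma> j)\<^sup>2" if "j < r" for j
    using sv_bounds(2)[OF U V rA \<sigma>_pos \<sigma>_mono that] unfolding svdA[symmetric] .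
  have lo1: "fro2 (mat_adjoint (col_block Ut 0 s) * col_block U r m) / (spec_norm B)\<^sup>2 \<le> (\<Sum>i<n. \<Sum>j<m. g1 i j)"
  proof -
    have "fro2 (mat_adjoint (col_block Ut 0 s) * col_block U r m) / (spec_norm B)\<^sup>2
      = (\<Sum>i<s. \<Sum>j\<in>{r..<m}. (cmod (Q $$ (i,j)))\<^sup>2 * (1 / (spec_norm B)\<^sup>2))"
      unfolding K1 by (simp add: sum_divide_distrib)
    also have "\<dots> \<le> (\<Sum>i<s. \<Sum>j\<in>{r..<m}. (cmod (Q $$ (i,j)))\<^sup>2 * (1 / \<sigma>t i)\<^sup>2)"
      by (intro sum_mono mult_left_mono pt1, auto)
    finally show ?thesis unfolding G1 .
  qed
  have lo2: "fro2 (mat_adjoint (col_block Vt s n) * col_block V 0 r) / (spec_norm A)\<^sup>2 \<le> (\<Sum>i<n. \<Sum>j<m. g2 i j)"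
  proof -
    have "fro2 (mat_adjoint (col_block Vt s n) * col_block V 0 r) / (spec_norm A)\<^sup>2
      = (\<Sum>i\<in>{s..<n}. \<Sum>j<r. (cmod (W $$ (i,j)))\<^sup>2 * (1 / (spec_norm A)\<^sup>2))"
      unfolding K2 by (simp add: sum_divide_distrib)
    also have "\<dots> \<le> (\<Sum>i\<in>{s..<n}. \<Sum>j<r. (cmod (W $$ (i,j)))\<^sup>2 * (1 / \<sigma> j)\<^sup>2)"
      by (intro sum_mono mult_left_mono pt2, auto)
    finally show ?thesis unfolding G2 .
  qed
  show "fro2 (mp_inverse B - mp_inverse A) \<le>
       (spec_norm (mp_inverse B))\<^sup>2 * fro2 (mat_adjoint (col_block Ut 0 s) * col_block U r m)
     + (spec_norm (mp_inverse A))\<^sup>2 * fro2 (mat_adjoint (col_block Vt s n) * col_block V 0 r)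
     + fro2 (mp_inverse B * (B - A) * mp_inverse A)"
    unfolding fP fR fPR using up1 up2 by linarith
  show "fro2 (mat_adjoint (col_block Ut 0 s) * col_block U r m) / (spec_norm B)\<^sup>2
     + fro2 (mat_adjoint (col_block Vt s n) * col_block V 0 r) / (spec_norm A)\<^sup>2
     + fro2 (mp_inverse B * (B - A) * mp_inverse A) \<le> fro2 (mp_inverse B - mp_inverse A)"
    unfolding fP fR fPR using lo1 lo2 by linarith
qed



lemma fro2_uminus: "fro2 (- M) = fro2 M"
  unfolding fro2_def by simp

lemma fro2_adj_swap: assumes "X \<in> carrier_mat k k1" "Y \<in> carrier_mat k k2"
  shows "fro2 (mat_adjoint X * Y) = fro2 (mat_adjoint Y * X)"
proof -
  have "mat_adjoint (mat_adjoint X * Y) = mat_adjoint Y * X"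
    using assms by (subst adj_mult2, auto)
  thus ?thesis by (metis fro2_adj)
qed

lemma fro2_minus_swap: assumes "X \<in> carrier_mat k l" "Y \<in> carrier_mat k l"
  shows "fro2 (X - Y) = fro2 (Y - X)"
proof -
  have "X - Y = - (Y - X)" using assms by (intro eq_matI, auto)
  thus ?thesis by (simp add: fro2_uminus)
qed

lemma fro2_mid_swap: assumes "M \<in> carrier_mat k l" "X \<in> carrier_mat l p" "Y \<in> carrier_mat l p" "N \<in> carrier_mat p q"
  shows "fro2 (M * (X - Y) * N) = fro2 (M * (Y - X) * N)"
proof -
  have "X - Y = - (Y - X)" using assms by (intro eq_matI, auto)
  hence "M * (X - Y) * N = - (M * (Y - X) * N)" using assms by simp
  thus ?thesis by (simp add: fro2_uminus)
qed

theorem corollary2p3: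
  fixes A B U V Ut Vt :: "complex mat" and m n r s :: nat and \<sigma> \<sigma>t :: "nat \<Rightarrow> real"
  assumes A: "A \<in> carrier_mat m n" and B: "B \<in> carrier_mat m n"
    and rkA: "vec_space.rank m A = r" and rkB: "vec_space.rank m B = s"
    and rA: "r \<le> m" "r \<le> n" and sB: "s \<le> m" "s \<le> n"
    and U: "unitary_mat m U" and V: "unitary_mat n V"
    and Ut: "unitary_mat m Ut" and Vt: "unitary_mat n Vt"
    and \<sigma>_pos: "\<forall>i<r. 0 < \<sigma> i" and \<sigma>_mono: "\<forall>i j. i \<le> j \<longrightarrow> j < r \<longrightarrow> \<sigma> j \<le> \<sigma> i"
    and \<sigma>t_pos: "\<forall>i<s. 0 < \<sigma>t i" and \<sigma>t_mono: "\<forall>i j. i \<le> j \<longrightarrow> j < s \<longrightarrow> \<sigma>t j \<le> \<sigma>t i"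
    and svdA: "A = U * sv_block m n r \<sigma> * mat_adjoint V"
    and svdB: "B = Ut * sv_block m n s \<sigma>t * mat_adjoint Vt"
  defines "U1 \<equiv> col_block U 0 r" and "U2 \<equiv> col_block U r m"
    and "V1 \<equiv> col_block V 0 r" and "V2 \<equiv> col_block V r n"
    and "Ut1 \<equiv> col_block Ut 0 s" and "Ut2 \<equiv> col_block Ut s m"
    and "Vt1 \<equiv> col_block Vt 0 s" and "Vt2 \<equiv> col_block Vt s n"
    and "E \<equiv> B - A"
  shows
    "((frob_norm (mp_inverse B - mp_inverse A))\<^sup>2 \<le>
       (spec_norm (mp_inverse B))\<^sup>2 * (frob_norm (mat_adjoint Ut1 * U2))\<^sup>2
     + (spec_norm (mp_inverse A))\<^sup>2 * (frob_norm (mat_adjoint Vt2 * V1))\<^sup>2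
     + (frob_norm (mp_inverse B * E * mp_inverse A))\<^sup>2) \<and>
    ((frob_norm (mp_inverse B - mp_inverse A))\<^sup>2 \<le>
       (spec_norm (mp_inverse A))\<^sup>2 * (frob_norm (mat_adjoint Ut2 * U1))\<^sup>2
     + (spec_norm (mp_inverse B))\<^sup>2 * (frob_norm (mat_adjoint Vt1 * V2))\<^sup>2
     + (frob_norm (mp_inverse A * E * mp_inverse B))\<^sup>2) \<and>
    ((frob_norm (mp_inverse B - mp_inverse A))\<^sup>2 \<ge>
       (frob_norm (mat_adjoint Ut1 * U2))\<^sup>2 / (spec_norm B)\<^sup>2
     + (frob_norm (mat_adjoint Vt2 * V1))\<^sup>2 / (spec_norm A)\<^sup>2
     + (frob_norm (mp_inverse B * E * mp_inverse A))\<^sup>2) \<and>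
    ((frob_norm (mp_inverse B - mp_inverse A))\<^sup>2 \<ge>
       (frob_norm (mat_adjoint Ut2 * U1))\<^sup>2 / (spec_norm A)\<^sup>2
     + (frob_norm (mat_adjoint Vt1 * V2))\<^sup>2 / (spec_norm B)\<^sup>2
     + (frob_norm (mp_inverse A * E * mp_inverse B))\<^sup>2)"
proof -
  note h1 = half[OF rA sB U V Ut Vt \<sigma>_pos \<sigma>_mono \<sigma>t_pos \<sigma>t_mono svdA svdB]
  note h2 = half[OF sB rA Ut Vt U V \<sigma>t_pos \<sigma>t_mono \<sigma>_pos \<sigma>_mono svdB svdA]
  note u = unitaryD[OF U] unitaryD[OF V] unitaryD[OF Ut] unitaryD[OF Vt]
  have Apc: "mp_inverse A \<in> carrier_mat n m"
    unfolding svd_pinv[OF U V rA \<sigma>_pos svdA] by (rule carr3[OF u(5) gd_carrier u(2)])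
  have Bpc: "mp_inverse B \<in> carrier_mat n m"
    unfolding svd_pinv[OF Ut Vt sB \<sigma>t_pos svdB] by (rule carr3[OF u(13) gd_carrier u(10)])
  have s1: "fro2 (mp_inverse A - mp_inverse B) = fro2 (mp_inverse B - mp_inverse A)"
    by (rule fro2_minus_swap[OF Apc Bpc])
  have s2: "fro2 (mp_inverse A * (A - B) * mp_inverse B) = fro2 (mp_inverse A * E * mp_inverse B)"
    unfolding E_def by (rule fro2_mid_swap[OF Apc A B Bpc])
  have s3: "fro2 (mat_adjoint U1 * Ut2) = fro2 (mat_adjoint Ut2 * U1)"
    unfolding U1_def Ut2_def using u by (intro fro2_adj_swap[of _ m], auto intro!: carrier_matI)
  have s4: "fro2 (mat_adjoint V2 * Vt1) = fro2 (mat_adjoint Vt1 * V2)"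
    unfolding V2_def Vt1_def using u by (intro fro2_adj_swap[of _ n], auto intro!: carrier_matI)
  show ?thesis unfolding frob_sq
    using h1 h2 s1 s2 s3 s4 unfolding U1_def U2_def V1_def V2_def Ut1_def Ut2_def Vt1_def Vt2_def E_def
    by (simp add: add.commute add.left_commute)
qed


end
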